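(* Let $X$ be a separable real Banach space. (a) If $X$ has property (au$^*$), then $X$ has property (au). (b) If $X$ is reflexive, then $X$ has property (au$^*$) if and only if $X$ has property (au).
   Context: All Banach spaces are real. A separable Banach space $X$ has property (au) if for every $x\in X$ and $\delta>0$ there is a closed subspace $W\subseteq X$ of finite codimension such that $\|x-w\|\le(1+\delta)\|x+w\|$ for all $w\in W$. A separable Banach space $X$ has property (au$^*$) if $\lim_{n\to\infty}(\|x^*+x_n^*\|-\|x^*-x_n^*\|)=0$ whenever $x^*\in X^*$ and $(x_n^* )_{n\ge1}$ is a weak$^*$-null sequence in $X^*$. *)

theory Defs
  imports "HOL-Analysis.Analysis"
begin

text \<open>The dual space X* is modelled by the type of bounded linear functionals
  \<open>'a \<Rightarrow>\<^sub>L real\<close> with the operator norm.\<close>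

definition separable_space :: "'a::metric_space itself \<Rightarrow> bool" where
  "separable_space _ \<longleftrightarrow> (\<exists>D::'a set. countable D \<and> closure D = UNIV)"

definition finite_codim :: "'a::real_vector set \<Rightarrow> bool" where
  "finite_codim W \<longleftrightarrow> (\<exists>F. finite F \<and> span (W \<union> F) = UNIV)"

definition weak_star_null :: "(nat \<Rightarrow> ('a::real_normed_vector \<Rightarrow>\<^sub>L real)) \<Rightarrow> bool" where
  "weak_star_null f \<longleftrightarrow> (\<forall>x. (\<lambda>n. blinfun_apply (f n) x) \<longlonglongrightarrow> 0)"

definition property_au :: "'a::real_normed_vector itself \<Rightarrow> bool" where
  "property_au _ \<longleftrightarrow>
     (\<forall>(x::'a) \<delta>. \<delta> > 0 \<longrightarrow>
        (\<exists>W. subspace W \<and> closed W \<and> finite_codim W \<and>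
             (\<forall>w\<in>W. norm (x - w) \<le> (1 + \<delta>) * norm (x + w))))"

definition property_au_star :: "'a::real_normed_vector itself \<Rightarrow> bool" where
  "property_au_star _ \<longleftrightarrow>
     (\<forall>(xs :: 'a \<Rightarrow>\<^sub>L real) (f :: nat \<Rightarrow> ('a \<Rightarrow>\<^sub>L real)). weak_star_null f \<longrightarrow>
        (\<lambda>n. norm (xs + f n) - norm (xs - f n)) \<longlonglongrightarrow> 0)"

definition reflexive_space :: "'a::real_normed_vector itself \<Rightarrow> bool" where
  "reflexive_space _ \<longleftrightarrow>
     (\<forall>\<phi> :: ('a \<Rightarrow>\<^sub>L real) \<Rightarrow>\<^sub>L real. \<exists>x::'a. \<forall>f. blinfun_apply \<phi> f = blinfun_apply f x)"

end

theory Submission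
  imports Defs
begin



lemma hb_norming:
  fixes y :: "'a::real_normed_vector"
  shows "\<exists>h. linear h \<and> (\<forall>v. \<bar>h v\<bar> \<le> norm v) \<and> h y = norm y"
proof -
  define A where "A = {G :: ('a \<times> real) set. subspace G \<and> (\<forall>v s t. (v,s)\<in>G \<longrightarrow> (v,t)\<in>G \<longrightarrow> s=t)
     \<and> (y, norm y)\<in>G \<and> (\<forall>v t. (v,t)\<in>G \<longrightarrow> t \<le> norm v)}"
  define G0 where "G0 = range (\<lambda>a. (a *\<^sub>R y, a * norm y))"
  have G0A: "G0 \<in> A"
  proof -
    have "subspace G0" unfolding subspace_def G0_def
    proof (intro conjI ballI allI)
      show "0 \<in> range (\<lambda>a. (a *\<^sub>R y, a * norm y))" by (rule image_eqI[where x=0]) (auto simp: zero_prod_def)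
    next
      fix p q assume "p \<in> range (\<lambda>a. (a *\<^sub>R y, a * norm y))" "q \<in> range (\<lambda>a. (a *\<^sub>R y, a * norm y))"
      then obtain a b where "p = (a *\<^sub>R y, a * norm y)" "q = (b *\<^sub>R y, b * norm y)" by blast
      then show "p + q \<in> range (\<lambda>a. (a *\<^sub>R y, a * norm y))"
        by (intro image_eqI[where x="a+b"]) (auto simp: algebra_simps)
    next
      fix c p assume "p \<in> range (\<lambda>a. (a *\<^sub>R y, a * norm y))"
      then obtain a where "p = (a *\<^sub>R y, a * norm y)" by blast
      then show "c *\<^sub>R p \<in> range (\<lambda>a. (a *\<^sub>R y, a * norm y))"
        by (intro image_eqI[where x="c*a"]) (auto simp: algebra_simps)
    qed
    moreover have "\<forall>v s t. (v,s)\<in>G0 \<longrightarrow> (v,t)\<in>G0 \<longrightarrow> s=t"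
      unfolding G0_def by (clarsimp; metis mult_eq_0_iff norm_eq_zero scaleR_cancel_right)
    moreover have "(y, norm y)\<in>G0" unfolding G0_def by (rule image_eqI[where x=1]) auto
    moreover have "\<forall>v t. (v,t)\<in>G0 \<longrightarrow> t \<le> norm v"
      unfolding G0_def by (auto simp: abs_mult intro!: mult_right_mono)
    ultimately show ?thesis unfolding A_def by blast
  qed
  have ub: "\<exists>U\<in>A. \<forall>X\<in>C. X \<subseteq> U" if ch: "subset.chain A C" for C
  proof (cases "C = {}")
    case True then show ?thesis using G0A by blast
  next
    case False
    have CA: "C \<subseteq> A" and tot: "\<And>X Y. X\<in>C \<Longrightarrow> Y\<in>C \<Longrightarrow> X \<subseteq> Y \<or> Y \<subseteq> X"
      using ch by (auto simp: subset_chain_def)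
    have "\<Union>C \<in> A"
    proof -
      have "subspace (\<Union>C)" unfolding subspace_def
      proof (intro conjI ballI allI)
        show "0 \<in> \<Union>C" using False CA by (auto simp: A_def subspace_def)
        fix a b assume "a \<in> \<Union>C" "b \<in> \<Union>C"
        then obtain X Y where "X\<in>C" "Y\<in>C" "a\<in>X" "b\<in>Y" by auto
        then have "a \<in> X \<union> Y" "b \<in> X \<union> Y" "X \<union> Y \<in> C" using tot[of X Y] by (auto simp: sup.absorb1 sup.absorb2)
        moreover have "subspace (X \<union> Y)" using calculation(3) CA by (auto simp: A_def)
        ultimately show "a + b \<in> \<Union>C" using subspace_add by blast
      next
        fix c a assume "a \<in> \<Union>C"
        then obtain X where "X \<in> C" "a \<in> X" by auto
        moreover have "subspace X" using calculation(1) CA by (auto simp: A_def)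
        ultimately show "c *\<^sub>R a \<in> \<Union>C" using subspace_scale by blast
      qed
      moreover have "\<forall>v s t. (v,s)\<in>\<Union>C \<longrightarrow> (v,t)\<in>\<Union>C \<longrightarrow> s=t"
      proof (intro allI impI)
        fix v s t assume "(v,s)\<in>\<Union>C" "(v,t)\<in>\<Union>C"
        then obtain X Y where "X\<in>C" "Y\<in>C" "(v,s)\<in>X" "(v,t)\<in>Y" by auto
        then show "s = t" using tot[of X Y] CA unfolding A_def by blast
      qed
      moreover have "(y, norm y) \<in> \<Union>C" using False CA by (auto simp: A_def)
      moreover have "\<forall>v t. (v,t)\<in>\<Union>C \<longrightarrow> t \<le> norm v" using CA by (auto simp: A_def)
      ultimately show ?thesis unfolding A_def by blast
    qed
    then show ?thesis by blast
  qed
  obtain M where MA: "M \<in> A" and Mmax0: "\<forall>X\<in>A. M \<subseteq> X \<longrightarrow> X = M"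
    using subset_Zorn[OF ub] by blast
  have Mmax: "\<And>X. X\<in>A \<Longrightarrow> M \<subseteq> X \<Longrightarrow> X = M" using Mmax0 by blast
  have Msub: "subspace M" and Mfun: "\<And>v s t. (v,s)\<in>M \<Longrightarrow> (v,t)\<in>M \<Longrightarrow> s=t"
    and My: "(y, norm y)\<in>M" and Mb: "\<And>v t. (v,t)\<in>M \<Longrightarrow> t \<le> norm v"
    using MA by (auto simp: A_def)
  have dom: "\<exists>t. (z,t)\<in>M" for z
  proof (rule ccontr)
    assume nz: "\<not> (\<exists>t. (z,t)\<in>M)"
    define L where "L = {s - norm (u - z) | u s. (u,s)\<in>M}"
    have key: "s - norm (u - z) \<le> norm (v + z) - t" if "(u,s)\<in>M" "(v,t)\<in>M" for u s v t
    proof -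
      have "(u+v, s+t) \<in> M" using Msub that subspace_add[of M "(u,s)" "(v,t)"] by simp
      then have "s + t \<le> norm (u+v)" by (rule Mb)
      also have "\<dots> \<le> norm (u - z) + norm (v + z)"
        using norm_triangle_ineq[of "u - z" "v + z"] by simp
      finally show ?thesis by simp
    qed
    have "(0,0) \<in> M" using Msub by (metis subspace_0 zero_prod_def)
    then have Lne: "L \<noteq> {}" unfolding L_def by blast
    have Lbdd: "bdd_above L" unfolding L_def bdd_above_def using key \<open>(0,0)\<in>M\<close> by blast
    define c where "c = Sup L"
    have c1: "s - norm (u - z) \<le> c" if "(u,s)\<in>M" for u s
      unfolding c_def using Lbdd that by (auto intro!: cSup_upper simp: L_def)
    have c2: "c \<le> norm (v + z) - t" if "(v,t)\<in>M" for v t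
      unfolding c_def using Lne key that by (auto intro!: cSup_least simp: L_def)
    define M' where "M' = {(v + a *\<^sub>R z, t + a * c) | v t a. (v,t)\<in>M}"
    have "M' \<in> A"
    proof -
      have "subspace M'" unfolding subspace_def M'_def
      proof (intro conjI ballI allI)
        show "0 \<in> {(v + a *\<^sub>R z, t + a * c) | v t a. (v,t)\<in>M}"
          using \<open>(0,0)\<in>M\<close> by (auto simp: zero_prod_def intro!: exI[of _ 0])
      next
        fix p q assume "p \<in> {(v + a *\<^sub>R z, t + a * c) | v t a. (v,t)\<in>M}"
          "q \<in> {(v + a *\<^sub>R z, t + a * c) | v t a. (v,t)\<in>M}"
        then obtain v t a v' t' a' where "(v,t)\<in>M" "(v',t')\<in>M" "p = (v + a *\<^sub>R z, t + a * c)"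
          "q = (v' + a' *\<^sub>R z, t' + a' * c)" by blast
        moreover have "(v+v', t+t') \<in> M" using Msub calculation subspace_add[of M "(v,t)" "(v',t')"] by simp
        moreover have "p + q = (v+v' + (a+a') *\<^sub>R z, t+t' + (a+a')*c)"
          using calculation by (simp add: algebra_simps)
        ultimately show "p + q \<in> {(v + a *\<^sub>R z, t + a * c) | v t a. (v,t)\<in>M}"
          by blast
      next
        fix r p assume "p \<in> {(v + a *\<^sub>R z, t + a * c) | v t a. (v,t)\<in>M}"
        then obtain v t a where "(v,t)\<in>M" "p = (v + a *\<^sub>R z, t + a * c)" by blast
        moreover have "(r *\<^sub>R v, r * t) \<in> M" using Msub calculation subspace_scale[of M "(v,t)" r] by simp
        moreover have "r *\<^sub>R p = (r *\<^sub>R v + (r*a) *\<^sub>R z, r*t + (r*a)*c)"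
          using calculation by (simp add: algebra_simps)
        ultimately show "r *\<^sub>R p \<in> {(v + a *\<^sub>R z, t + a * c) | v t a. (v,t)\<in>M}"
          by blast
      qed
      moreover have "\<forall>w s t. (w,s)\<in>M' \<longrightarrow> (w,t)\<in>M' \<longrightarrow> s=t"
      proof (intro allI impI)
        fix w s s' assume "(w,s)\<in>M'" "(w,s')\<in>M'"
        then obtain v t a v' t' a' where V: "(v,t)\<in>M" "(v',t')\<in>M" "w = v + a *\<^sub>R z" "s = t + a * c"
          "w = v' + a' *\<^sub>R z" "s' = t' + a' * c" unfolding M'_def by blast
        have "(v - v', t - t') \<in> M" using Msub V subspace_diff[of M "(v,t)" "(v',t')"] by simp
        moreover have "v - v' = (a' - a) *\<^sub>R z" using V by (simp add: algebra_simps)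
        ultimately have "a = a'"
        proof -
          assume m: "(v - v', t - t') \<in> M" and e: "v - v' = (a' - a) *\<^sub>R z"
          show "a = a'"
          proof (rule ccontr)
            assume "a \<noteq> a'"
            then have "(inverse (a' - a) *\<^sub>R (v - v'), inverse (a'-a) * (t - t')) \<in> M"
              using subspace_scale[OF Msub m, of "inverse (a'-a)"] by simp
            then show False using nz e \<open>a\<noteq>a'\<close> by auto
          qed
        qed
        then have "v = v'" using V by simp
        then have "t = t'" using Mfun V by blast
        then show "s = s'" using V \<open>a = a'\<close> by simp
      qed
      moreover have "(y, norm y)\<in>M'" unfolding M'_def using My
        by (intro CollectI exI[of _ y] exI[of _ "norm y"] exI[of _ 0]) simp
      moreover have "\<forall>w s. (w,s)\<in>M' \<longrightarrow> s \<le> norm w"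
      proof (intro allI impI)
        fix w s assume "(w,s)\<in>M'"
        then obtain v t a where V: "(v,t)\<in>M" "w = v + a *\<^sub>R z" "s = t + a * c" unfolding M'_def by blast
        consider "a = 0" | "a > 0" | "a < 0" by linarith
        then show "s \<le> norm w"
        proof cases
          case 1 then show ?thesis using V Mb by simp
        next
          case 2
          have "(inverse a *\<^sub>R v, inverse a * t) \<in> M" using subspace_scale[OF Msub V(1), of "inverse a"] by simp
          from c2[OF this] have "c \<le> norm (inverse a *\<^sub>R v + z) - inverse a * t" .
          then have "a * c \<le> a * (norm (inverse a *\<^sub>R v + z) - inverse a * t)" using 2
            by (intro mult_left_mono) auto
          also have "\<dots> = a * norm (inverse a *\<^sub>R v + z) - t" using 2 by (simp add: right_diff_distrib)
          also have "a * norm (inverse a *\<^sub>R v + z) = norm (v + a *\<^sub>R z)"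
          proof -
            have "a * norm (inverse a *\<^sub>R v + z) = norm (a *\<^sub>R (inverse a *\<^sub>R v + z))" using 2 by simp
            also have "a *\<^sub>R (inverse a *\<^sub>R v + z) = v + a *\<^sub>R z" using 2 by (simp add: scaleR_add_right)
            finally show ?thesis .
          qed
          finally show ?thesis using V by simp
        next
          case 3
          define b where "b = - a"
          have b: "b > 0" using 3 b_def by simp
          have "(inverse b *\<^sub>R v, inverse b * t) \<in> M" using subspace_scale[OF Msub V(1), of "inverse b"] by simp
          from c1[OF this] have "inverse b * t - norm (inverse b *\<^sub>R v - z) \<le> c" .
          then have "b * (inverse b * t) - b * norm (inverse b *\<^sub>R v - z) \<le> b * c" using b
            by (metis mult_left_mono less_eq_real_def right_diff_distrib)
          moreover have "b * norm (inverse b *\<^sub>R v - z) = norm (v - b *\<^sub>R z)"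
          proof -
            have "b * norm (inverse b *\<^sub>R v - z) = norm (b *\<^sub>R (inverse b *\<^sub>R v - z))" using b by simp
            also have "b *\<^sub>R (inverse b *\<^sub>R v - z) = v - b *\<^sub>R z" using b by (simp add: scaleR_diff_right)
            finally show ?thesis .
          qed
          ultimately have "t - norm (v - b *\<^sub>R z) \<le> b * c" using b by (simp add: mult.assoc[symmetric])
          then show ?thesis using V b_def by (simp add: algebra_simps)
        qed
      qed
      ultimately show ?thesis unfolding A_def by blast
    qed
    moreover have "M \<subseteq> M'" unfolding M'_def
    proof
      fix p assume "p \<in> M" then obtain v t where "p = (v,t)" "(v,t) \<in> M" by (cases p) auto
      then show "p \<in> {(v + a *\<^sub>R z, t + a * c) | v t a. (v,t)\<in>M}"
        by (intro CollectI exI[of _ v] exI[of _ t] exI[of _ 0]) simp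
    qed
    moreover have "(z, c) \<in> M'" unfolding M'_def using \<open>(0,0)\<in>M\<close>
      by (intro CollectI exI[of _ 0] exI[of _ 0] exI[of _ 1]) simp
    ultimately show False using Mmax nz by blast
  qed
  define h where "h v = (THE t. (v,t)\<in>M)" for v
  have hM: "(v, h v) \<in> M" for v
    unfolding h_def using dom Mfun by (metis theI)
  have hU: "(v,t)\<in>M \<Longrightarrow> h v = t" for v t using hM Mfun by blast
  have "linear h"
  proof (rule linearI)
    fix a b show "h (a + b) = h a + h b"
      using subspace_add[OF Msub hM[of a] hM[of b]] hU by simp
  next
    fix r a show "h (r *\<^sub>R a) = r *\<^sub>R h a"
      using subspace_scale[OF Msub hM[of a], of r] hU by simp
  qed
  moreover have "\<bar>h v\<bar> \<le> norm v" for v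
  proof -
    have "h v \<le> norm v" using Mb hM by blast
    moreover have "h (-v) \<le> norm (-v)" using Mb hM by blast
    moreover have "h (-v) = - h v" using \<open>linear h\<close> by (simp add: linear_neg)
    ultimately show ?thesis by simp
  qed
  moreover have "h y = norm y" using hU My by blast
  ultimately show ?thesis by blast
qed



definition Kset :: "('b::real_normed_vector \<Rightarrow> real) set" where
  "Kset = {\<phi>. linear \<phi> \<and> (\<forall>y. \<bar>\<phi> y\<bar> \<le> norm y)}"

lemma compact_Kset: "compact (Kset :: ('b::real_normed_vector \<Rightarrow> real) set)"
proof -
  define B where "B = (PiE UNIV (\<lambda>y::'b. cball (0::real) (norm y)))"
  have "compactin (product_topology (\<lambda>_. euclidean) UNIV) B"
    unfolding B_def by (subst compactin_PiE) auto
  then have cB: "compact B" by (simp add: euclidean_product_topology)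
  have cl: "closed {\<phi>::'b\<Rightarrow>real. linear \<phi>}"
  proof -
    have "{\<phi>::'b\<Rightarrow>real. linear \<phi>} = {\<phi>. \<forall>x. \<forall>y. \<phi> (x + y) = \<phi> x + \<phi> y} \<inter> {\<phi>. \<forall>c. \<forall>x. \<phi> (c *\<^sub>R x) = c *\<^sub>R \<phi> x}"
      by (auto simp: linear_iff)
    moreover have "closed {\<phi>::'b\<Rightarrow>real. \<forall>x. \<forall>y. \<phi> (x + y) = \<phi> x + \<phi> y}"
      by (intro closed_Collect_all closed_Collect_eq continuous_intros continuous_on_product_coordinates)
    moreover have "closed {\<phi>::'b\<Rightarrow>real. \<forall>c. \<forall>x. \<phi> (c *\<^sub>R x) = c *\<^sub>R \<phi> x}"
      by (intro closed_Collect_all closed_Collect_eq continuous_intros continuous_on_product_coordinates)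
    ultimately show ?thesis by auto
  qed
  have "Kset = B \<inter> {\<phi>. linear \<phi>}" unfolding Kset_def B_def by (auto simp: PiE_iff)
  then show ?thesis using compact_Int_closed[OF cB cl] by simp
qed

lemma Kset_Blinfun:
  assumes "\<phi> \<in> Kset"
  shows "bounded_linear \<phi>" "norm (Blinfun \<phi>) \<le> 1" "blinfun_apply (Blinfun \<phi>) = \<phi>"
proof -
  have l: "linear \<phi>" and b: "\<And>y. \<bar>\<phi> y\<bar> \<le> norm y" using assms by (auto simp: Kset_def)
  show bl: "bounded_linear \<phi>"
  proof (rule bounded_linear_intro[where K=1])
    show "\<phi> (x + y) = \<phi> x + \<phi> y" for x y using l by (simp add: linear_iff)
    show "\<phi> (r *\<^sub>R x) = r *\<^sub>R \<phi> x" for r x using l by (simp add: linear_iff)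
    show "norm (\<phi> x) \<le> norm x * 1" for x using b[of x] by simp
  qed
  show ap: "blinfun_apply (Blinfun \<phi>) = \<phi>" using bl by (rule bounded_linear_Blinfun_apply)
  show "norm (Blinfun \<phi>) \<le> 1" by (rule norm_blinfun_bound) (auto simp: ap b)
qed

lemma blinfun_in_Kset:
  assumes "norm (f :: 'b::real_normed_vector \<Rightarrow>\<^sub>L real) \<le> 1"
  shows "blinfun_apply f \<in> Kset"
proof -
  have "\<bar>f y\<bar> \<le> norm y" for y
    using norm_blinfun[of f y] assms mult_right_mono[OF assms norm_ge_zero[of y]] by simp
  then show ?thesis unfolding Kset_def by (auto intro: bounded_linear.linear blinfun.bounded_linear_right)
qed

lemma cluster_point:
  fixes T :: "'i \<Rightarrow> ('b::real_normed_vector \<Rightarrow> real) set"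
  assumes sub: "\<And>i. T i \<subseteq> Kset"
    and dir: "\<And>I. finite I \<Longrightarrow> \<exists>j. T j \<noteq> {} \<and> (\<forall>i\<in>I. T j \<subseteq> T i)"
  obtains \<zeta> where "\<zeta> \<in> Kset"
    "\<And>i Y e. finite Y \<Longrightarrow> e > 0 \<Longrightarrow> \<exists>h\<in>T i. \<forall>y\<in>Y. \<bar>h y - \<zeta> y\<bar> < e"
proof -
  have "Kset \<inter> (\<Inter>i\<in>UNIV. closure (T i)) \<noteq> {}"
  proof (rule compact_imp_fip_image[OF compact_Kset])
    fix I :: "'i set" assume "finite I"
    from dir[OF this] obtain j where "T j \<noteq> {}" "\<forall>i\<in>I. T j \<subseteq> T i" by blast
    then obtain h where "h \<in> T j" by blast
    have "h \<in> Kset" using sub \<open>h \<in> T j\<close> by blast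
    moreover have "h \<in> closure (T i)" if "i \<in> I" for i
      using \<open>h \<in> T j\<close> \<open>\<forall>i\<in>I. T j \<subseteq> T i\<close> that closure_subset[of "T i"] by blast
    ultimately have "h \<in> Kset \<inter> (\<Inter>i\<in>I. closure (T i))" by blast
    then show "Kset \<inter> (\<Inter>i\<in>I. closure (T i)) \<noteq> {}" by blast
  qed auto
  then obtain \<zeta> where z: "\<zeta> \<in> Kset" "\<And>i. \<zeta> \<in> closure (T i)" by blast
  have *: "\<exists>h\<in>T i. \<forall>y\<in>Y. \<bar>h y - \<zeta> y\<bar> < e" if "finite Y" "e > 0" for i Y e
  proof -
    define U where "U = {f. \<forall>y\<in>Y. f (id y) \<in> ball (\<zeta> y) e}"
    have "open U" unfolding U_def using that by (intro product_topology_basis') auto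
    moreover have "\<zeta> \<in> U" unfolding U_def using that by auto
    ultimately obtain h where "h \<in> T i" "h \<in> U" using z(2)[of i] open_Int_closure_eq_empty[of U "T i"] by blast
    then have "\<forall>y\<in>Y. \<bar>\<zeta> y - h y\<bar> < e" unfolding U_def by (auto simp: dist_real_def)
    then have "\<forall>y\<in>Y. \<bar>h y - \<zeta> y\<bar> < e" by (simp add: abs_minus_commute[of "\<zeta> _"])
    then show ?thesis using \<open>h \<in> T i\<close> by blast
  qed
  show ?thesis by (rule that[OF z(1)]) (rule *)
qed




lemma fc_kernels:
  fixes F :: "('a::real_normed_vector \<Rightarrow>\<^sub>L real) set"
  assumes "finite F"
  shows "finite_codim {w. \<forall>f\<in>F. blinfun_apply f w = 0}"
  using assms
proof (induction F rule: finite_induct)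
  case empty
  show ?case unfolding finite_codim_def by (intro exI[of _ "{}"]) (simp add: span_UNIV)
next
  case (insert f F)
  define W where "W = {w. \<forall>f\<in>F. blinfun_apply f w = 0}"
  obtain E where E: "finite E" "span (W \<union> E) = UNIV" using insert.IH unfolding finite_codim_def W_def by blast
  have eq: "{w. \<forall>g\<in>insert f F. blinfun_apply g w = 0} = W \<inter> {w. f w = 0}" unfolding W_def by auto
  show ?case
  proof (cases "\<exists>e\<in>W. f e \<noteq> 0")
    case False
    then have "W \<inter> {w. f w = 0} = W" by auto
    then show ?thesis using E eq unfolding finite_codim_def by auto
  next
    case True
    then obtain e where e: "e \<in> W" "f e \<noteq> 0" by blast
    define e' where "e' = e /\<^sub>R f e"
    have fe': "f e' = 1" using e unfolding e'_def by (simp add: blinfun.scaleR_right)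
    have "W \<union> E \<subseteq> span ((W \<inter> {w. f w = 0}) \<union> insert e' E)"
    proof
      fix x assume x: "x \<in> W \<union> E"
      show "x \<in> span ((W \<inter> {w. f w = 0}) \<union> insert e' E)"
      proof (cases "x \<in> E")
        case True then show ?thesis by (simp add: span_base)
      next
        case False
        then have xW: "x \<in> W" using x by auto
        have e'W: "e' \<in> W" using e unfolding e'_def W_def by (simp add: blinfun.scaleR_right)
        have "x - f x *\<^sub>R e' \<in> W \<inter> {w. f w = 0}"
          using xW e'W fe' unfolding W_def by (simp add: blinfun.diff_right blinfun.scaleR_right)
        then have a: "x - f x *\<^sub>R e' \<in> span ((W \<inter> {w. f w = 0}) \<union> insert e' E)" by (simp add: span_base)
        have b: "f x *\<^sub>R e' \<in> span ((W \<inter> {w. f w = 0}) \<union> insert e' E)"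
          by (intro span_scale span_base) simp
        have "x = (x - f x *\<^sub>R e') + f x *\<^sub>R e'" by simp
        then show ?thesis using span_add[OF a b] by simp
      qed
    qed
    then have "span (W \<union> E) \<subseteq> span ((W \<inter> {w. f w = 0}) \<union> insert e' E)"
      by (intro span_minimal) auto
    then show ?thesis using E eq unfolding finite_codim_def
      by (intro exI[of _ "insert e' E"]) auto
  qed
qed

lemma closed_kernels:
  fixes F :: "('a::real_normed_vector \<Rightarrow>\<^sub>L real) set"
  shows "closed {w. \<forall>f\<in>F. blinfun_apply f w = 0}" "subspace {w. \<forall>f\<in>F. blinfun_apply f w = 0}"
proof -
  have "{w. \<forall>f\<in>F. blinfun_apply f w = 0} = (\<Inter>f\<in>F. {w. blinfun_apply f w = 0})" by auto
  moreover have "closed {w. blinfun_apply f w = 0}" for f :: "'a \<Rightarrow>\<^sub>L real"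
    by (intro closed_Collect_eq continuous_intros) 
  ultimately show "closed {w. \<forall>f\<in>F. blinfun_apply f w = 0}" by auto
  show "subspace {w. \<forall>f\<in>F. blinfun_apply f w = 0}"
    unfolding subspace_def by (auto simp: blinfun.add_right blinfun.scaleR_right)
qed

lemma dist_lemma:
  fixes V :: "'a::real_normed_vector set"
  assumes "closed V" "subspace V" "a \<notin> V"
  obtains d where "d > 0" "\<And>v k. v \<in> V \<Longrightarrow> \<bar>k\<bar> * d \<le> norm (v + k *\<^sub>R a)"
proof -
  have "V \<noteq> {}" using assms(2) subspace_0 by blast
  define d where "d = infdist a V"
  have "d > 0" unfolding d_def using infdist_pos_not_in_closed assms \<open>V \<noteq> {}\<close> by blast
  moreover have "\<bar>k\<bar> * d \<le> norm (v + k *\<^sub>R a)" if "v \<in> V" for v k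
  proof (cases "k = 0")
    case True then show ?thesis by simp
  next
    case False
    have "- (v /\<^sub>R k) \<in> V" using that assms(2) by (simp add: subspace_neg subspace_scale)
    then have "d \<le> dist a (- (v /\<^sub>R k))" unfolding d_def by (rule infdist_le)
    also have "dist a (- (v /\<^sub>R k)) = norm (v /\<^sub>R k + a)" by (simp add: dist_norm add.commute)
    finally have "\<bar>k\<bar> * d \<le> \<bar>k\<bar> * norm (v /\<^sub>R k + a)" by (simp add: mult_left_mono)
    also have "\<bar>k\<bar> * norm (v /\<^sub>R k + a) = norm (k *\<^sub>R (v /\<^sub>R k + a))" by simp
    also have "k *\<^sub>R (v /\<^sub>R k + a) = v + k *\<^sub>R a" using False by (simp add: scaleR_add_right)
    finally show ?thesis .
  qed
  ultimately show ?thesis using that by blast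
qed

lemma span_insert_subspace:
  assumes "subspace V"
  shows "span (insert a V) = {x. \<exists>k. x - k *\<^sub>R a \<in> V}"
proof -
  have "span V = V" using assms by (simp add: span_eq_iff)
  then show ?thesis by (subst span_insert) (simp only:)
qed

lemma closed_span_insert:
  fixes V :: "'a::banach set"
  assumes "closed V" "subspace V"
  shows "closed (span (insert a V))"
proof (cases "a \<in> V")
  case True
  then have "insert a V = V" by auto
  moreover have "span V = V" using assms by (simp add: span_eq_iff)
  ultimately show ?thesis using assms by (simp only:)
next
  case False
  obtain d where d: "d > 0" "\<And>v k. v \<in> V \<Longrightarrow> \<bar>k\<bar> * d \<le> norm (v + k *\<^sub>R a)"
    using dist_lemma[OF assms False] by blast
  show ?thesis unfolding span_insert_subspace[OF assms(2)] closed_sequential_limits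
  proof (intro allI impI, elim conjE)
    fix x l assume xs: "\<forall>n. x n \<in> {x. \<exists>k. x - k *\<^sub>R a \<in> V}" and lim: "x \<longlonglongrightarrow> l"
    then have "\<forall>n. \<exists>k. x n - k *\<^sub>R a \<in> V" by simp
    then obtain k where k0: "\<forall>n. x n - k n *\<^sub>R a \<in> V" using choice[of "\<lambda>n k. x n - k *\<^sub>R a \<in> V"] by blast
    then have k: "\<And>n. x n - k n *\<^sub>R a \<in> V" by blast
    have kdiff: "\<bar>k n - k m\<bar> * d \<le> norm (x n - x m)" for n m
    proof -
      have "(x m - k m *\<^sub>R a) - (x n - k n *\<^sub>R a) \<in> V" using k assms(2) by (simp add: subspace_diff)
      from d(2)[OF this, of "k m - k n"]
      have "\<bar>k m - k n\<bar> * d \<le> norm ((x m - k m *\<^sub>R a) - (x n - k n *\<^sub>R a) + (k m - k n) *\<^sub>R a)" .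
      also have "(x m - k m *\<^sub>R a) - (x n - k n *\<^sub>R a) + (k m - k n) *\<^sub>R a = x m - x n"
        by (simp add: algebra_simps)
      finally show ?thesis by (metis abs_minus_commute norm_minus_commute)
    qed
    have "Cauchy k"
    proof (rule metric_CauchyI)
      fix e :: real assume "e > 0"
      have "Cauchy x" using lim by (rule LIMSEQ_imp_Cauchy)
      moreover have "e * d > 0" using \<open>e>0\<close> d(1) by simp
      ultimately have "\<exists>M. \<forall>m\<ge>M. \<forall>n\<ge>M. dist (x m) (x n) < e * d" by (rule metric_CauchyD)
      then obtain M where M: "\<And>m n. m \<ge> M \<Longrightarrow> n \<ge> M \<Longrightarrow> dist (x m) (x n) < e * d"
        by blast
      show "\<exists>M. \<forall>m\<ge>M. \<forall>n\<ge>M. dist (k m) (k n) < e"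
      proof (intro exI allI impI)
        fix m n assume "m \<ge> M" "n \<ge> M"
        then have "\<bar>k m - k n\<bar> * d < e * d" using kdiff[of m n] M[of m n] by (simp add: dist_norm)
        then show "dist (k m) (k n) < e" using d(1) by (simp add: dist_real_def)
      qed
    qed
    then have "convergent k" by (rule Cauchy_convergent)
    then obtain kk where kk: "k \<longlonglongrightarrow> kk" unfolding convergent_def by blast
    have "(\<lambda>n. x n - k n *\<^sub>R a) \<longlonglongrightarrow> l - kk *\<^sub>R a"
      by (intro tendsto_intros lim kk)
    then have "l - kk *\<^sub>R a \<in> V" by (rule closed_sequentially[OF assms(1) k])
    then show "l \<in> {x. \<exists>k. x - k *\<^sub>R a \<in> V}" by blast
  qed
qed

definition Sx :: "(('a::real_normed_vector \<Rightarrow>\<^sub>L real) \<times> 'a) list \<Rightarrow> 'a \<Rightarrow> 'a" where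
  "Sx L y = sum_list (map (\<lambda>p. blinfun_apply (fst p) y *\<^sub>R snd p) L)"

lemma Sx_bl: "bounded_linear (Sx L)"
proof (induction L)
  case Nil then show ?case by (simp add: Sx_def bounded_linear_zero)
next
  case (Cons p L)
  have "Sx (p # L) = (\<lambda>y. blinfun_apply (fst p) y *\<^sub>R snd p + Sx L y)" by (auto simp: Sx_def)
  moreover have "bounded_linear (\<lambda>y. blinfun_apply (fst p) y *\<^sub>R snd p)"
    by (rule bounded_linear_compose[OF bounded_linear_scaleR_left blinfun.bounded_linear_right])
  ultimately show ?case using Cons by (simp add: bounded_linear_add)
qed

lemma Sx_append: "Sx (L @ [(c,e)]) y = Sx L y + blinfun_apply c y *\<^sub>R e"
  by (simp add: Sx_def)

lemma proj_lemma:
  fixes V :: "'a::banach set"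
  assumes "finite F" "closed V" "subspace V" "span (V \<union> F) = UNIV"
  shows "\<exists>L. \<forall>y. y - Sx L y \<in> V"
  using assms
proof (induction F arbitrary: V rule: finite_induct)
  case empty
  have "span V = V" using empty.prems(2) by (simp add: span_eq_iff)
  then have "V = UNIV" using empty.prems(3) by (simp only: Un_empty_right)
  then show ?case by simp
next
  case (insert a F)
  define V' where "V' = span (insert a V)"
  have V'eq: "V' = {x. \<exists>k. x - k *\<^sub>R a \<in> V}" unfolding V'_def by (rule span_insert_subspace[OF insert.prems(2)])
  have cV': "closed V'" unfolding V'_def by (rule closed_span_insert[OF insert.prems(1,2)])
  have sV': "subspace V'" unfolding V'_def by (rule subspace_span)
  have "V \<union> insert a F \<subseteq> span (V' \<union> F)"
  proof -
    have "V \<subseteq> V'" unfolding V'_def using span_superset[of "insert a V"] by blast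
    moreover have "a \<in> V'" unfolding V'_def by (simp add: span_base)
    ultimately show ?thesis using span_superset[of "V' \<union> F"] by blast
  qed
  then have "span (V \<union> insert a F) \<subseteq> span (V' \<union> F)" by (intro span_minimal) auto
  then have "span (V' \<union> F) = UNIV" using insert.prems(3) by auto
  from insert.IH[OF cV' sV' this] obtain L where L: "\<And>y. y - Sx L y \<in> V'" by blast
  show ?case
  proof (cases "a \<in> V")
    case True
    have "y - Sx L y \<in> V" for y
    proof -
      obtain k where "(y - Sx L y) - k *\<^sub>R a \<in> V" using L[of y] V'eq by blast
      moreover have "k *\<^sub>R a \<in> V" using True insert.prems(2) by (simp add: subspace_scale)
      ultimately show ?thesis using subspace_add[OF insert.prems(2)] by fastforce
    qed
    then show ?thesis by blast
  next
    case False
    define P where "P y = y - Sx L y" for y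
    have blP: "bounded_linear P" unfolding P_def
      by (intro bounded_linear_sub bounded_linear_ident Sx_bl)
    have ex: "\<exists>k. P y - k *\<^sub>R a \<in> V" for y using L[of y] V'eq unfolding P_def by blast
    have uq: "k = k'" if "P y - k *\<^sub>R a \<in> V" "P y - k' *\<^sub>R a \<in> V" for y k k'
    proof (rule ccontr)
      assume "k \<noteq> k'"
      have "(P y - k *\<^sub>R a) - (P y - k' *\<^sub>R a) \<in> V" by (rule subspace_diff[OF insert.prems(2) that])
      moreover have "(P y - k *\<^sub>R a) - (P y - k' *\<^sub>R a) = (k' - k) *\<^sub>R a" by (simp add: algebra_simps)
      ultimately have "(k' - k) *\<^sub>R a \<in> V" by simp
      then have "inverse (k' - k) *\<^sub>R ((k' - k) *\<^sub>R a) \<in> V" by (rule subspace_scale[OF insert.prems(2)])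
      then show False using \<open>k \<noteq> k'\<close> False by simp
    qed
    define T where "T y = (THE k. P y - k *\<^sub>R a \<in> V)" for y
    have T: "P y - T y *\<^sub>R a \<in> V" for y
      unfolding T_def using ex[of y] uq[of y] by (metis (no_types, lifting) theI)
    have Tu: "T y = k" if "P y - k *\<^sub>R a \<in> V" for y k using uq[OF T that] .
    obtain d where d: "d > 0" "\<And>v k. v \<in> V \<Longrightarrow> \<bar>k\<bar> * d \<le> norm (v + k *\<^sub>R a)"
      using dist_lemma[OF insert.prems(1,2) False] by blast
    obtain K where K: "\<And>y. norm (P y) \<le> norm y * K" using bounded_linear.bounded[OF blP] by blast
    have "bounded_linear T"
    proof (rule bounded_linear_intro[where K="K / d"])
      fix x y
      have "P (x + y) - (T x + T y) *\<^sub>R a = (P x - T x *\<^sub>R a) + (P y - T y *\<^sub>R a)"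
        using linear_add[OF bounded_linear.linear[OF blP]] by (simp add: algebra_simps)
      also have "\<dots> \<in> V" using T insert.prems(2) by (simp add: subspace_add)
      finally show "T (x + y) = T x + T y" by (rule Tu)
    next
      fix r x
      have "P (r *\<^sub>R x) - (r *\<^sub>R T x) *\<^sub>R a = r *\<^sub>R (P x - T x *\<^sub>R a)"
        using linear_scale[OF bounded_linear.linear[OF blP]] by (simp add: algebra_simps)
      also have "\<dots> \<in> V" using T insert.prems(2) by (simp add: subspace_scale)
      finally show "T (r *\<^sub>R x) = r *\<^sub>R T x" by (rule Tu)
    next
      fix x
      have "\<bar>T x\<bar> * d \<le> norm ((P x - T x *\<^sub>R a) + T x *\<^sub>R a)" by (rule d(2)[OF T])
      also have "\<dots> = norm (P x)" by simp
      also have "\<dots> \<le> norm x * K" by (rule K)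
      finally have "\<bar>T x\<bar> * d \<le> norm x * K" .
      then have "\<bar>T x\<bar> \<le> norm x * K / d" using d(1) by (simp add: pos_le_divide_eq)
      then show "norm (T x) \<le> norm x * (K / d)" by simp
    qed
    then have "blinfun_apply (Blinfun T) = T" by (rule bounded_linear_Blinfun_apply)
    then have "y - Sx (L @ [(Blinfun T, a)]) y \<in> V" for y
      using T[of y] by (simp add: Sx_append P_def algebra_simps)
    then show ?thesis by blast
  qed
qed



lemma ubp:
  fixes f :: "nat \<Rightarrow> ('a::banach \<Rightarrow>\<^sub>L real)"
  assumes lim: "\<And>x. (\<lambda>n. blinfun_apply (f n) x) \<longlonglongrightarrow> 0"
  shows "\<exists>B. \<forall>n. norm (f n) \<le> B"
proof -
  define T where "T k = {y. \<forall>n. \<bar>blinfun_apply (f n) y\<bar> \<le> real k}" for k :: nat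
  have clT: "closed (T k)" for k
  proof -
    have "T k = (\<Inter>n. {y. \<bar>blinfun_apply (f n) y\<bar> \<le> real k})" unfolding T_def by auto
    moreover have "closed {y. \<bar>blinfun_apply (f n) y\<bar> \<le> real k}" for n
      by (intro closed_Collect_le continuous_intros)
    ultimately show ?thesis by auto
  qed
  have cov: "(\<Union>k. T k) = UNIV"
  proof -
    have "y \<in> (\<Union>k. T k)" for y
    proof -
      have "Bseq (\<lambda>n. blinfun_apply (f n) y)" using lim[of y] by (intro convergent_imp_Bseq convergentI)
      then obtain K where K: "\<And>n. norm (blinfun_apply (f n) y) \<le> K" by (auto simp: Bseq_def)
      obtain k :: nat where "K \<le> real k" using real_arch_simple by blast
      then have "y \<in> T k" unfolding T_def using K by (auto intro: order_trans)
      then show ?thesis by blast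
    qed
    then show ?thesis by blast
  qed
  have "\<exists>k. interior (T k) \<noteq> {}"
  proof (rule ccontr)
    assume "\<not> (\<exists>k. interior (T k) \<noteq> {})"
    then have "euclidean interior_of (\<Union>(range T)) = {}"
      by (intro Baire_category_alt) (auto simp: completely_metrizable_space_euclidean clT)
    then show False using cov by simp
  qed
  then obtain k a where "a \<in> interior (T k)" by blast
  then obtain r where r: "r > 0" "ball a r \<subseteq> T k" using mem_interior by blast
  have "norm (f n) \<le> 4 * real k / r" for n
  proof (rule norm_blinfun_bound)
    show "0 \<le> 4 * real k / r" using r by simp
    fix x
    show "norm (blinfun_apply (f n) x) \<le> 4 * real k / r * norm x"
    proof (cases "x = 0")
      case True then show ?thesis by simp
    next
      case False
      define c where "c = r / 2 / norm x"
      have c: "c > 0" using False r unfolding c_def by simp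
      have "norm (c *\<^sub>R x) = r / 2" using False r unfolding c_def by simp
      then have "a + c *\<^sub>R x \<in> ball a r" using r by (simp add: dist_norm)
      then have 1: "\<bar>blinfun_apply (f n) (a + c *\<^sub>R x)\<bar> \<le> real k" using r unfolding T_def by blast
      have "a \<in> ball a r" using r by simp
      then have 2: "\<bar>blinfun_apply (f n) a\<bar> \<le> real k" using r unfolding T_def by blast
      have "blinfun_apply (f n) (a + c *\<^sub>R x) = blinfun_apply (f n) a + c * blinfun_apply (f n) x"
        by (simp add: blinfun.add_right blinfun.scaleR_right)
      then have "c * \<bar>blinfun_apply (f n) x\<bar> \<le> 2 * real k" using 1 2 c by (simp add: abs_mult)
      then have "\<bar>blinfun_apply (f n) x\<bar> \<le> 2 * real k / c" using c by (simp add: pos_le_divide_eq mult.commute)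
      also have "2 * real k / c = 4 * real k / r * norm x" using False r unfolding c_def by (simp add: field_simps)
      finally show ?thesis by simp
    qed
  qed
  then show ?thesis by blast
qed




lemma approx_norm:
  fixes g :: "'a::real_normed_vector \<Rightarrow>\<^sub>L real"
  assumes "e > 0"
  shows "\<exists>x. norm x \<le> 1 \<and> norm g - e \<le> blinfun_apply g x"
proof (rule ccontr)
  assume "\<not> ?thesis"
  then have lt: "\<And>x. norm x \<le> 1 \<Longrightarrow> blinfun_apply g x < norm g - e" by (meson not_le)
  have "0 < norm g - e" using lt[of 0] by simp
  have "norm (blinfun_apply g x) \<le> (norm g - e) * norm x" for x
  proof (cases "x = 0")
    case True then show ?thesis by simp
  next
    case False
    define u where "u = x /\<^sub>R norm x"
    have nu: "norm u \<le> 1" "norm (-u) \<le> 1" using False by (auto simp: u_def)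
    have gu: "blinfun_apply g x = norm x * blinfun_apply g u"
      using False by (simp add: u_def blinfun.scaleR_right)
    have "blinfun_apply g u < norm g - e" "- blinfun_apply g u < norm g - e"
      using lt[OF nu(1)] lt[OF nu(2)] by (auto simp: blinfun.minus_right)
    then have "\<bar>blinfun_apply g u\<bar> \<le> norm g - e" by linarith
    then show ?thesis using gu by (simp add: abs_mult mult.commute mult_left_mono)
  qed
  then have "norm g \<le> norm g - e" using \<open>0 < norm g - e\<close> by (intro norm_blinfun_bound) auto
  then show False using assms by simp
qed

lemma Sx_small:
  fixes L :: "(('a::real_normed_vector \<Rightarrow>\<^sub>L real) \<times> 'a) list"
  assumes "\<And>p. p \<in> set L \<Longrightarrow> \<bar>blinfun_apply (fst p) w\<bar> \<le> \<eta>"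
  shows "norm (Sx L w) \<le> \<eta> * sum_list (map (\<lambda>p. norm (snd p)) L)"
  using assms
proof (induction L)
  case Nil then show ?case by (simp add: Sx_def)
next
  case (Cons p L)
  have "norm (Sx (p # L) w) \<le> norm (blinfun_apply (fst p) w *\<^sub>R snd p) + norm (Sx L w)"
    unfolding Sx_def by (simp only: list.map sum_list.Cons) (rule norm_triangle_ineq)
  also have "norm (blinfun_apply (fst p) w *\<^sub>R snd p) \<le> \<eta> * norm (snd p)"
    using Cons.prems[of p] by (simp add: mult_right_mono)
  also have "norm (Sx L w) \<le> \<eta> * sum_list (map (\<lambda>p. norm (snd p)) L)"
    using Cons by simp
  finally show ?case by (simp add: algebra_simps)
qed

lemma eval_in_Kset:
  fixes x :: "'a::real_normed_vector"
  assumes "norm x \<le> 1"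
  shows "(\<lambda>g::'a \<Rightarrow>\<^sub>L real. blinfun_apply g x) \<in> Kset"
proof -
  have "linear (\<lambda>g::'a \<Rightarrow>\<^sub>L real. blinfun_apply g x)"
    by (intro linearI) (auto simp: blinfun.add_left blinfun.scaleR_left)
  moreover have "\<bar>blinfun_apply g x\<bar> \<le> norm g" for g :: "'a \<Rightarrow>\<^sub>L real"
    using norm_blinfun[of g x] mult_left_mono[OF assms norm_ge_zero[of g]] by simp
  ultimately show ?thesis unfolding Kset_def by blast
qed

lemma partB_half:
  fixes xs :: "'a::banach \<Rightarrow>\<^sub>L real" and f :: "nat \<Rightarrow> ('a \<Rightarrow>\<^sub>L real)"
  assumes au: "property_au TYPE('a)" and refl: "reflexive_space TYPE('a)"
    and wn: "weak_star_null f" and ep: "\<epsilon> > 0"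
  shows "eventually (\<lambda>n. norm (xs + f n) - norm (xs - f n) < \<epsilon>) sequentially"
proof (rule ccontr)
  assume ne: "\<not> ?thesis"
  define I where "I = {n. \<epsilon> \<le> norm (xs + f n) - norm (xs - f n)}"
  have freq: "\<exists>n\<ge>N. n \<in> I" for N using ne unfolding eventually_sequentially I_def by (auto simp: not_less)
  have lim: "\<And>y. (\<lambda>n. blinfun_apply (f n) y) \<longlonglongrightarrow> 0" using wn unfolding weak_star_null_def by blast
  obtain B0 where B0: "\<And>n. norm (f n) \<le> B0" using ubp[OF lim] by blast
  define B where "B = norm xs + B0 + 1"
  have "B0 \<ge> 0" using B0[of 0] norm_ge_zero[of "f 0"] by linarith
  then have Bpos: "B > 0" unfolding B_def using norm_ge_zero[of xs] by linarith
  have Bb: "norm (xs - f n) \<le> B" for n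
    using norm_triangle_ineq4[of xs "f n"] B0[of n] unfolding B_def by linarith
  have "\<forall>n. \<exists>u. norm u \<le> 1 \<and> norm (xs + f n) - \<epsilon>/4 \<le> blinfun_apply (xs + f n) u"
    using approx_norm[of "\<epsilon>/4"] ep by auto
  then obtain xn where xn: "\<And>n. norm (xn n) \<le> 1"
    "\<And>n. norm (xs + f n) - \<epsilon>/4 \<le> blinfun_apply (xs + f n) (xn n)" by metis
  define T where "T N = {(\<lambda>g::'a \<Rightarrow>\<^sub>L real. blinfun_apply g (xn n)) | n. n \<ge> N \<and> n \<in> I}" for N :: nat
  have Tsub: "T N \<subseteq> Kset" for N unfolding T_def using eval_in_Kset xn(1) by blast
  have Tdir: "\<exists>j. T j \<noteq> {} \<and> (\<forall>i\<in>J. T j \<subseteq> T i)" if "finite J" for J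
  proof -
    define j where "j = Max (insert 0 J)"
    have "i \<le> j" if "i \<in> J" for i unfolding j_def using \<open>finite J\<close> that by simp
    then have "\<forall>i\<in>J. T j \<subseteq> T i" unfolding T_def by fastforce
    moreover obtain n where "n \<ge> j" "n \<in> I" using freq by blast
    then have "T j \<noteq> {}" unfolding T_def by blast
    ultimately show ?thesis by blast
  qed
  obtain \<zeta> where \<zeta>K: "\<zeta> \<in> Kset"
    and \<zeta>c: "\<And>i Y e. finite Y \<Longrightarrow> e > 0 \<Longrightarrow> \<exists>h\<in>T i. \<forall>y\<in>Y. \<bar>h y - \<zeta> y\<bar> < e"
    using cluster_point[of T, OF Tsub Tdir] by blast
  have "blinfun_apply (Blinfun \<zeta>) = \<zeta>" using Kset_Blinfun(3)[OF \<zeta>K] .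
  obtain x where x: "\<And>g. \<zeta> g = blinfun_apply g x"
    using refl \<open>blinfun_apply (Blinfun \<zeta>) = \<zeta>\<close> unfolding reflexive_space_def by metis
  define \<delta> where "\<delta> = \<epsilon> / (4 * B)"
  have \<delta>: "\<delta> > 0" "B * \<delta> = \<epsilon> / 4" using ep Bpos unfolding \<delta>_def by auto
  obtain W where W: "subspace W" "closed W" "finite_codim W"
    "\<And>w. w\<in>W \<Longrightarrow> norm (x - w) \<le> (1+\<delta>) * norm (x + w)"
    using au \<delta>(1) unfolding property_au_def by blast
  obtain F where "finite F" "span (W \<union> F) = UNIV" using W(3) unfolding finite_codim_def by blast
  then obtain L where L: "\<And>y. y - Sx L y \<in> W" using proj_lemma[of F W] W by blast
  define Cs where "Cs = sum_list (map (\<lambda>p. norm (snd p)) L)"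
  have Cs: "Cs \<ge> 0" unfolding Cs_def by (intro sum_list_nonneg) auto
  define \<eta> where "\<eta> = \<epsilon> / (8 * (4 + B * Cs * (2 + \<delta>)))"
  have "4 + B * Cs * (2 + \<delta>) > 0" using Bpos Cs \<delta> by (simp add: add_pos_nonneg)
  then have \<eta>: "\<eta> > 0" "\<eta> * (4 + B * Cs * (2 + \<delta>)) = \<epsilon> / 8" unfolding \<eta>_def using ep
    by (auto simp: field_simps)
  obtain N where N: "\<And>n. n \<ge> N \<Longrightarrow> \<bar>blinfun_apply (f n) x\<bar> < \<eta>"
    using lim[of x] \<eta>(1) unfolding LIMSEQ_def dist_real_def by auto
  obtain h where "h \<in> T N" and hY: "\<forall>y\<in>insert xs (fst ` set L). \<bar>h y - \<zeta> y\<bar> < \<eta>"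
    using \<zeta>c[of "insert xs (fst ` set L)" \<eta> N] \<eta>(1) by blast
  then obtain n where n: "n \<ge> N" "n \<in> I" "h = (\<lambda>g. blinfun_apply g (xn n))" unfolding T_def by blast
  define w where "w = xn n - x"
  have hw: "\<bar>blinfun_apply g w\<bar> < \<eta>" if "g \<in> insert xs (fst ` set L)" for g
  proof -
    have "h g - \<zeta> g = blinfun_apply g w" unfolding n(3) x w_def by (simp add: blinfun.diff_right)
    then show ?thesis using hY that by metis
  qed
  define s where "s = Sx L w"
  have s: "norm s \<le> \<eta> * Cs" unfolding s_def Cs_def
    using hw by (intro Sx_small) (auto intro: less_imp_le)
  define v where "v = w - s"
  have vW: "v \<in> W" unfolding v_def s_def by (rule L)
  define P where "P = norm (xs + f n)"
  define M where "M = norm (xs - f n)"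
  have e1: "P - \<epsilon>/4 \<le> blinfun_apply (xs + f n) (xn n)" unfolding P_def by (rule xn(2))
  have xnx: "xn n = x + w" unfolding w_def by simp
  have eq: "blinfun_apply (xs + f n) (xn n) - blinfun_apply (xs - f n) (x - v)
      = 2 * blinfun_apply (f n) x + 2 * blinfun_apply xs w - blinfun_apply (xs - f n) s"
    unfolding xnx v_def
    by (simp add: blinfun.add_left blinfun.diff_left blinfun.add_right blinfun.diff_right algebra_simps)
  have b1: "\<bar>blinfun_apply (f n) x\<bar> < \<eta>" using N n(1) by blast
  have b2: "\<bar>blinfun_apply xs w\<bar> < \<eta>" using hw by simp
  have b3: "\<bar>blinfun_apply (xs - f n) s\<bar> \<le> B * (\<eta> * Cs)"
  proof -
    have "\<bar>blinfun_apply (xs - f n) s\<bar> \<le> norm (xs - f n) * norm s" using norm_blinfun[of "xs - f n" s] by simp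
    also have "\<dots> \<le> B * (\<eta> * Cs)" using Bb[of n] s Bpos by (intro mult_mono) auto
    finally show ?thesis .
  qed
  have e2: "blinfun_apply (xs - f n) (x - v) \<le> M * norm (x - v)"
    unfolding M_def using norm_blinfun[of "xs - f n" "x - v"] by simp
  have e3: "norm (x - v) \<le> (1+\<delta>) * norm (x + v)" using W(4)[OF vW] .
  have "x + v = xn n - s" unfolding v_def w_def by simp
  then have e4: "norm (x + v) \<le> 1 + \<eta> * Cs"
    using norm_triangle_ineq4[of "xn n" s] xn(1)[of n] s by simp
  have M0: "M \<ge> 0" "M \<le> B" unfolding M_def using Bb by auto
  have "M * norm (x - v) \<le> M * ((1+\<delta>) * (1 + \<eta> * Cs))"
  proof -
    have "norm (x - v) \<le> (1+\<delta>) * (1 + \<eta> * Cs)"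
      using e3 mult_left_mono[OF e4, of "1+\<delta>"] \<delta>(1) by linarith
    then show ?thesis using M0 by (simp add: mult_left_mono)
  qed
  also have "M * ((1+\<delta>) * (1 + \<eta> * Cs)) = M + M * ((1+\<delta>) * (1 + \<eta> * Cs) - 1)"
    by (simp add: algebra_simps)
  also have "M * ((1+\<delta>) * (1 + \<eta> * Cs) - 1) \<le> B * ((1+\<delta>) * (1 + \<eta> * Cs) - 1)"
  proof (rule mult_right_mono)
    show "M \<le> B" by (rule M0(2))
    have "(1+\<delta>) * (1 + \<eta> * Cs) \<ge> 1 * 1" using \<delta>(1) \<eta>(1) Cs
      by (intro mult_mono) auto
    then show "0 \<le> (1+\<delta>) * (1 + \<eta> * Cs) - 1" by simp
  qed
  also have "B * ((1+\<delta>) * (1 + \<eta> * Cs) - 1) = B * \<delta> + B * \<eta> * Cs * (1 + \<delta>)"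
    by (simp add: algebra_simps)
  finally have e5: "M * norm (x - v) \<le> M + (B * \<delta> + B * \<eta> * Cs * (1 + \<delta>))" by simp
  have e6: "4 * \<eta> + B * (\<eta> * Cs) + B * \<eta> * Cs * (1 + \<delta>) = \<eta> * (4 + B * Cs * (2 + \<delta>))"
    by (simp add: algebra_simps)
  have "P \<le> \<epsilon>/4 + M + \<epsilon>/4 + \<epsilon>/8"
    using e1 eq b1 b2 b3 e2 e5 e6 \<delta>(2) \<eta>(2) by linarith
  moreover have "\<epsilon> \<le> P - M" using n(2) unfolding I_def P_def M_def by simp
  ultimately show False using ep by linarith
qed

lemma partB:
  assumes au: "property_au TYPE('a::banach)" and refl: "reflexive_space TYPE('a)"
  shows "property_au_star TYPE('a)"
  unfolding property_au_star_def
proof (intro allI impI)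
  fix xs :: "'a \<Rightarrow>\<^sub>L real" and f :: "nat \<Rightarrow> ('a \<Rightarrow>\<^sub>L real)"
  assume wn: "weak_star_null f"
  have wn': "weak_star_null (\<lambda>n. - f n)" using wn unfolding weak_star_null_def
    by (auto simp: blinfun.minus_left intro: tendsto_minus_cancel_left[THEN iffD1])
  show "(\<lambda>n. norm (xs + f n) - norm (xs - f n)) \<longlonglongrightarrow> 0"
  proof (rule LIMSEQ_I)
    fix r :: real assume r: "r > 0"
    have 1: "eventually (\<lambda>n. norm (xs + f n) - norm (xs - f n) < r) sequentially"
      by (rule partB_half[OF au refl wn r])
    have 2: "eventually (\<lambda>n. norm (xs + - f n) - norm (xs - - f n) < r) sequentially"
      by (rule partB_half[OF au refl wn' r])
    from eventually_conj[OF 1 2] obtain N where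
      "\<And>n. n \<ge> N \<Longrightarrow> norm (xs + f n) - norm (xs - f n) < r \<and> norm (xs + - f n) - norm (xs - - f n) < r"
      unfolding eventually_sequentially by blast
    then show "\<exists>N. \<forall>n\<ge>N. norm (norm (xs + f n) - norm (xs - f n) - 0) < r"
      by (intro exI[of _ N]) (auto simp: abs_less_iff)
  qed
qed



lemma partA:
  assumes sep: "separable_space TYPE('a::banach)" and aus: "property_au_star TYPE('a)"
  shows "property_au TYPE('a)"
  unfolding property_au_def
proof (intro allI impI)
  fix x :: 'a and \<delta> :: real assume \<delta>: "\<delta> > 0"
  show "\<exists>W. subspace W \<and> closed W \<and> finite_codim W \<and> (\<forall>w\<in>W. norm (x - w) \<le> (1+\<delta>) * norm (x + w))"
  proof (rule ccontr)
    assume ne: "\<not> ?thesis"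
    define bad where "bad w \<longleftrightarrow> (1+\<delta>) * norm (x + w) < norm (x - w)" for w
    define ker where "ker fs = {w. \<forall>f\<in>set fs. blinfun_apply f w = 0}" for fs :: "('a \<Rightarrow>\<^sub>L real) list"
    have badex: "\<exists>w. w \<in> ker fs \<and> bad w" for fs
    proof -
      have "subspace (ker fs)" "closed (ker fs)" unfolding ker_def by (rule closed_kernels)+
      moreover have "finite_codim (ker fs)" unfolding ker_def by (rule fc_kernels) simp
      ultimately obtain w where "w \<in> ker fs" "\<not> norm (x - w) \<le> (1+\<delta>) * norm (x + w)" using ne by blast
      then show ?thesis unfolding bad_def by (auto simp: not_le)
    qed
    have x0: "x \<noteq> 0"
    proof
      assume "x = 0"
      obtain w where "bad w" using badex by blast
      then have "(1+\<delta>) * norm w < norm w" unfolding bad_def using \<open>x = 0\<close> by simp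
      moreover have "norm w \<le> (1+\<delta>) * norm w" using \<delta> by (simp add: mult_le_cancel_right1)
      ultimately show False by simp
    qed
    define T where "T fs = {h \<in> Kset. \<exists>w. w \<in> ker fs \<and> bad w \<and> h (x - w) = norm (x - w)}" for fs
    have Tsub: "T fs \<subseteq> Kset" for fs unfolding T_def by blast
    have Tne: "T fs \<noteq> {}" for fs
    proof -
      obtain w where w: "w \<in> ker fs" "bad w" using badex by blast
      obtain h where "linear h" "\<forall>v. \<bar>h v\<bar> \<le> norm v" "h (x - w) = norm (x - w)"
        using hb_norming[of "x - w"] by blast
      then have "h \<in> T fs" unfolding T_def Kset_def using w by blast
      then show ?thesis by blast
    qed
    have Tdir: "\<exists>j. T j \<noteq> {} \<and> (\<forall>i\<in>J. T j \<subseteq> T i)" if fJ: "finite J" for J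
    proof -
      obtain ls where ls: "set ls = J" using finite_list[OF fJ] by blast
      define j where "j = concat ls"
      have "ker j \<subseteq> ker i" if "i \<in> J" for i
        unfolding ker_def j_def using ls that by auto
      then have "\<forall>i\<in>J. T j \<subseteq> T i" unfolding T_def by blast
      then show ?thesis using Tne by blast
    qed
    obtain \<zeta> where \<zeta>K: "\<zeta> \<in> Kset"
      and \<zeta>c: "\<And>i Y e. finite Y \<Longrightarrow> e > 0 \<Longrightarrow> \<exists>h\<in>T i. \<forall>y\<in>Y. \<bar>h y - \<zeta> y\<bar> < e"
      using cluster_point[of T, OF Tsub Tdir] by blast
    have \<zeta>b: "\<bar>\<zeta> v\<bar> \<le> norm v" for v using \<zeta>K unfolding Kset_def by blast
    define z where "z = Blinfun \<zeta>"
    have z: "blinfun_apply z = \<zeta>" unfolding z_def by (rule Kset_Blinfun(3)[OF \<zeta>K])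
    obtain D :: "'a set" where D: "countable D" "closure D = UNIV"
      using sep unfolding separable_space_def by blast
    have "D \<noteq> {}" using D(2) by auto
    define d where "d = from_nat_into D"
    have dD: "range d = D" unfolding d_def using D(1) \<open>D \<noteq> {}\<close> by simp
    have "\<forall>n. \<exists>h\<in>T [z]. \<forall>y\<in>d ` {..n}. \<bar>h y - \<zeta> y\<bar> < 1 / (real n + 1)"
    proof
      fix n :: nat
      show "\<exists>h\<in>T [z]. \<forall>y\<in>d ` {..n}. \<bar>h y - \<zeta> y\<bar> < 1 / (real n + 1)"
        by (rule \<zeta>c) auto
    qed
    then obtain hs where hs0: "\<forall>n. hs n \<in> T [z] \<and> (\<forall>y\<in>d ` {..n}. \<bar>hs n y - \<zeta> y\<bar> < 1 / (real n + 1))"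
      using choice[of "\<lambda>n h. h \<in> T [z] \<and> (\<forall>y\<in>d ` {..n}. \<bar>h y - \<zeta> y\<bar> < 1 / (real n + 1))"] by blast
    have hs: "\<And>n. hs n \<in> T [z]"
      "\<And>n k. k \<le> n \<Longrightarrow> \<bar>hs n (d k) - \<zeta> (d k)\<bar> < 1 / (real n + 1)"
      using hs0 by auto
    have "\<forall>n. \<exists>w. w \<in> ker [z] \<and> bad w \<and> hs n (x - w) = norm (x - w)"
      using hs(1) unfolding T_def by blast
    then obtain ws where ws0: "\<forall>n. ws n \<in> ker [z] \<and> bad (ws n) \<and> hs n (x - ws n) = norm (x - ws n)"
      using choice[of "\<lambda>n w. w \<in> ker [z] \<and> bad w \<and> hs n (x - w) = norm (x - w)"] by blast
    have ws: "\<And>n. ws n \<in> ker [z]" "\<And>n. bad (ws n)"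
      "\<And>n. hs n (x - ws n) = norm (x - ws n)" using ws0 by auto
    have hK: "hs n \<in> Kset" for n using hs(1) Tsub by blast
    have hb: "\<bar>hs n v\<bar> \<le> norm v" for n v using hK[of n] unfolding Kset_def by blast
    have hlin: "linear (hs n)" for n using hK[of n] unfolding Kset_def by blast
    define H where "H n = Blinfun (hs n)" for n
    have H: "blinfun_apply (H n) = hs n" "norm (H n) \<le> 1" for n
      unfolding H_def using Kset_Blinfun[OF hK[of n]] by auto
    define g where "g n = H n - z" for n
    have conv: "(\<lambda>n. hs n y - \<zeta> y) \<longlonglongrightarrow> 0" for y
    proof (rule LIMSEQ_I)
      fix r :: real assume r: "r > 0"
      have "y \<in> closure D" using D(2) by simp
      then obtain dk where "dk \<in> D" "dist dk y < r / 4" using r closure_approachable[of y D]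
        by (metis divide_pos_pos zero_less_numeral)
      then obtain k where k: "dist (d k) y < r / 4" using dD by auto
      obtain N0 where N0: "inverse (real (Suc N0)) < r / 4" using reals_Archimedean[of "r/4"] r by auto
      define N where "N = max k N0"
      show "\<exists>N. \<forall>n\<ge>N. norm (hs n y - \<zeta> y - 0) < r"
      proof (intro exI allI impI)
        fix n assume "n \<ge> N"
        then have kn: "k \<le> n" and "N0 \<le> n" unfolding N_def by auto
        have "1 / (real n + 1) \<le> inverse (real (Suc N0))" using \<open>N0 \<le> n\<close>
          by (simp add: field_simps)
        then have a: "\<bar>hs n (d k) - \<zeta> (d k)\<bar> < r / 4" using hs(2)[OF kn] N0 by linarith
        have "hs n y - \<zeta> y = hs n (y - d k) + (hs n (d k) - \<zeta> (d k)) + \<zeta> (d k - y)"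
          using hlin[of n] linear_diff[OF hlin[of n]] linear_diff[OF Kset_Blinfun(1)[OF \<zeta>K, THEN bounded_linear.linear]]
          by simp
        moreover have "\<bar>hs n (y - d k)\<bar> < r / 4" using hb[of n "y - d k"] k by (simp add: dist_norm norm_minus_commute)
        moreover have "\<bar>\<zeta> (d k - y)\<bar> < r / 4" using \<zeta>b[of "d k - y"] k by (simp add: dist_norm)
        ultimately have "\<bar>hs n y - \<zeta> y\<bar> < r"
          using a abs_triangle_ineq[of "hs n (y - d k) + (hs n (d k) - \<zeta> (d k))" "\<zeta> (d k - y)"]
            abs_triangle_ineq[of "hs n (y - d k)" "hs n (d k) - \<zeta> (d k)"] by linarith
        then show "norm (hs n y - \<zeta> y - 0) < r" by simp
      qed
    qed
    have wsn: "weak_star_null g" unfolding weak_star_null_def g_def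
      using conv by (simp add: blinfun.diff_left H z)
    then have lim: "(\<lambda>n. norm (z + g n) - norm (z - g n)) \<longlonglongrightarrow> 0"
      using aus unfolding property_au_star_def by blast
    define \<theta> where "\<theta> = norm x * \<delta> / (4 * (1 + \<delta>))"
    have \<theta>: "\<theta> > 0" unfolding \<theta>_def using x0 \<delta> by simp
    have e1: "eventually (\<lambda>n. \<bar>norm (z + g n) - norm (z - g n)\<bar> < \<delta>/2) sequentially"
      using tendstoD[OF lim, of "\<delta>/2"] \<delta> by (simp add: dist_real_def)
    have e2: "eventually (\<lambda>n. \<bar>hs n x - \<zeta> x\<bar> < \<theta>) sequentially"
      using tendstoD[OF conv[of x] \<theta>] by (simp add: dist_real_def)
    from eventually_happens'[OF sequentially_bot eventually_conj[OF e1 e2]]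
    obtain n where n1: "\<bar>norm (z + g n) - norm (z - g n)\<bar> < \<delta>/2" and n2: "\<bar>hs n x - \<zeta> x\<bar> < \<theta>" by blast
    define w where "w = ws n"
    define a where "a = norm (x - w)"
    define b where "b = norm (x + w)"
    define q where "q = z - g n"
    have "z + g n = H n" unfolding g_def by simp
    then have "norm (z + g n) \<le> 1" using H(2)[of n] by simp
    then have nq: "norm q < 1 + \<delta>/2" using n1 unfolding q_def by linarith
    have zw: "\<zeta> w = 0" using ws(1)[of n] unfolding ker_def w_def by (simp add: z)
    have hxw: "hs n x - hs n w = a" using ws(3)[of n] linear_diff[OF hlin[of n]] unfolding a_def w_def by simp
    have "blinfun_apply q (x + w) = 2 * \<zeta> x + 2 * \<zeta> w - hs n x - hs n w"
      unfolding q_def g_def by (simp add: blinfun.diff_left blinfun.add_right H z)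
    also have "\<dots> = 2 * (\<zeta> x - hs n x) + a" using zw hxw by simp
    finally have qv: "blinfun_apply q (x + w) = 2 * (\<zeta> x - hs n x) + a" .
    have "blinfun_apply q (x + w) \<le> norm q * b" unfolding b_def using norm_blinfun[of q "x + w"] by simp
    also have "\<dots> \<le> (1 + \<delta>/2) * b" unfolding b_def using nq by (intro mult_right_mono) auto
    finally have "blinfun_apply q (x + w) \<le> (1 + \<delta>/2) * b" .
    moreover have "\<zeta> x - hs n x > - \<theta>" using n2 by (simp add: abs_less_iff)
    ultimately have A1: "blinfun_apply q (x + w) \<le> (1 + \<delta>/2) * b" "- \<theta> < \<zeta> x - hs n x" by auto
    have "a - 2 * \<theta> < blinfun_apply q (x + w)" unfolding qv using A1(2) by (simp add: algebra_simps)
    then have f1: "a - 2 * \<theta> \<le> (1 + \<delta>/2) * b" using A1(1) by linarith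
    have f2: "(1+\<delta>) * b < a" using ws(2)[of n] unfolding bad_def a_def b_def w_def .
    have "norm (2 *\<^sub>R x) \<le> a + b" unfolding a_def b_def
      using norm_triangle_ineq[of "x - w" "x + w"] by (simp add: scaleR_2)
    then have f3: "2 * norm x \<le> a + b" by simp
    have b0: "b \<ge> 0" unfolding b_def by simp
    have "b \<le> (1+\<delta>) * b" using b0 \<delta> by (simp add: mult_le_cancel_right1)
    then have "b < a" using f2 by linarith
    then have f4: "norm x < a" using f3 by linarith
    have "(1+\<delta>) * (a - 2 * \<theta>) \<le> (1+\<delta>) * ((1 + \<delta>/2) * b)"
      using f1 \<delta> by (intro mult_left_mono) auto
    also have "\<dots> = (1 + \<delta>/2) * ((1+\<delta>) * b)" by simp
    also have "\<dots> \<le> (1 + \<delta>/2) * a" using f2 \<delta> by (intro mult_left_mono) auto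
    finally have "(1+\<delta>) * (a - 2 * \<theta>) \<le> (1 + \<delta>/2) * a" .
    then have "\<delta>/2 * a \<le> 2 * \<theta> * (1 + \<delta>)" by (simp add: algebra_simps)
    also have "2 * \<theta> * (1 + \<delta>) = \<delta>/2 * norm x" unfolding \<theta>_def using \<delta> by (simp add: field_simps)
    finally have "a \<le> norm x" using \<delta> by simp
    then show False using f4 by simp
  qed
qed


theorem proposition2p3:
  assumes "separable_space TYPE('a::banach)"
  shows "(property_au_star TYPE('a) \<longrightarrow> property_au TYPE('a))
       \<and> (reflexive_space TYPE('a) \<longrightarrow> (property_au_star TYPE('a) \<longleftrightarrow> property_au TYPE('a)))"
  using partA[OF assms] partB[where 'a='a] by blast

end
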